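(* Let $n$ be a positive integer and let $T$ be a nonempty subset of $\mathbb{N}_0^d$. If there are points $\alpha,\beta\in E_n^\infty(T)$ such that $\beta-\alpha\in\mathbb{N}^d$ (all entries strictly positive), then $E_n^\infty(T)=E_1^\infty(T\cup\{\alpha,\beta\})=\Lambda(T)\cap\mathbb{N}_0^d$.
   Context: $\mathbb{N}=\{1,2,\dots\}$, $\mathbb{N}_0=\{0,1,2,\dots\}$. For nonempty $\Gamma\subseteq\mathbb{N}_0^d$, $\Lambda(\Gamma)$ is the coset in $\mathbb{Z}^d$ generated by $\Gamma$ (smallest coset of a subgroup of $\mathbb{Z}^d$ containing $\Gamma$); each $\lambda\in\Lambda(\Gamma)$ can be written $\lambda=\gamma+\sum_{\alpha\in\Gamma,\alpha\neq\gamma}m_{\gamma,\alpha}(\alpha-\gamma)$ with $\gamma\in\Gamma$ and integers $m_{\gamma,\alpha}$, finitely many nonzero. $d(\Gamma,\lambda)$ is the infimum over all such representations of $\max\big(\sum_{m_{\gamma,\alpha}>0}m_{\gamma,\alpha},-\sum_{m_{\gamma,\alpha}<0}m_{\gamma,\alpha}\big)$, and $E_n(\Gamma)=\{\lambda\in\Lambda(\Gamma)\cap\mathbb{N}_0^d:d(\Gamma,\lambda)\leq n\}$. Set $E_n^1(T)=E_n(T)$, $E_n^{k+1}(T)=E_n(E_n^k(T))$, and $E_n^\infty(T)=\bigcup_{k\geq1}E_n^k(T)$. *)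

theory Defs
  imports "HOL-Analysis.Analysis" "HOL-Library.Extended_Nat"
begin

text \<open>Points of Z^d are vectors int^'d (d = CARD('d) \<ge> 1 fixed).\<close>

definition nonneg_pts :: "(int^'d) set" where
  "nonneg_pts = {x. \<forall>i. x $ i \<ge> 0}"

definition pos_pts :: "(int^'d) set" where
  "pos_pts = {x. \<forall>i. x $ i > 0}"

definition is_subgroup :: "(int^'d) set \<Rightarrow> bool" where
  "is_subgroup H \<longleftrightarrow> 0 \<in> H \<and> (\<forall>x\<in>H. \<forall>y\<in>H. x + y \<in> H) \<and> (\<forall>x\<in>H. - x \<in> H)"

definition is_coset :: "(int^'d) set \<Rightarrow> bool" where
  "is_coset C \<longleftrightarrow> (\<exists>a H. is_subgroup H \<and> C = (\<lambda>h. a + h) ` H)"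

definition Lambda :: "(int^'d) set \<Rightarrow> (int^'d) set" where
  "Lambda \<Gamma> = \<Inter>{C. is_coset C \<and> \<Gamma> \<subseteq> C}"

definition is_repr :: "(int^'d) set \<Rightarrow> int^'d \<Rightarrow> int^'d \<Rightarrow> (int^'d \<Rightarrow> int) \<Rightarrow> bool" where
  "is_repr \<Gamma> l g m \<longleftrightarrow> g \<in> \<Gamma> \<and> finite {a. m a \<noteq> 0} \<and> {a. m a \<noteq> 0} \<subseteq> \<Gamma> - {g} \<and>
     l = g + (\<Sum>a\<in>{a. m a \<noteq> 0}. m a *s (a - g))"

definition repr_cost :: "(int^'d \<Rightarrow> int) \<Rightarrow> nat" where
  "repr_cost m = nat (max (\<Sum>a\<in>{a. m a > 0}. m a) (- (\<Sum>a\<in>{a. m a < 0}. m a)))"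

definition dist_G :: "(int^'d) set \<Rightarrow> int^'d \<Rightarrow> enat" where
  "dist_G \<Gamma> l = (INF p\<in>{(g, m). is_repr \<Gamma> l g m}. enat (repr_cost (snd p)))"

definition E :: "nat \<Rightarrow> (int^'d) set \<Rightarrow> (int^'d) set" where
  "E n \<Gamma> = {l \<in> Lambda \<Gamma> \<inter> nonneg_pts. dist_G \<Gamma> l \<le> enat n}"

definition E_inf :: "nat \<Rightarrow> (int^'d) set \<Rightarrow> (int^'d) set" where
  "E_inf n T = (\<Union>k\<in>{1..}. (E n ^^ k) T)"

end

theory Submission imports Defs begin

lemma repr_le: "is_repr G l g m \<Longrightarrow> dist_G G l \<le> enat (repr_cost m)"
  unfolding dist_G_def by (rule INF_lower2[of "(g,m)"]) auto

lemma Lambda_mono: "X \<subseteq> Y \<Longrightarrow> Lambda X \<subseteq> Lambda Y"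
  unfolding Lambda_def by blast

lemma Lambda_sub: "X \<subseteq> Lambda Y \<Longrightarrow> Lambda X \<subseteq> Lambda Y"
  unfolding Lambda_def by blast

lemma Lambda_ge: "X \<subseteq> Lambda X"
  unfolding Lambda_def by blast

lemma coset_closed:
  assumes "is_coset C" "x \<in> C" "y \<in> C" "z \<in> C" shows "x + y - z \<in> C"
proof -
  obtain a H where H: "is_subgroup H" "C = (\<lambda>h. a + h) ` H"
    using assms(1) unfolding is_coset_def by blast
  obtain h1 h2 h3 where h: "h1 \<in> H" "h2 \<in> H" "h3 \<in> H" "x = a + h1" "y = a + h2" "z = a + h3"
    using assms H by blast
  have "h1 + h2 + - h3 \<in> H" using H(1) h unfolding is_subgroup_def by blast
  moreover have "x + y - z = a + (h1 + h2 + - h3)" using h by (simp add: algebra_simps)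
  ultimately show ?thesis using H by blast
qed

lemma Lambda_closed: "x \<in> Lambda G \<Longrightarrow> y \<in> Lambda G \<Longrightarrow> z \<in> Lambda G \<Longrightarrow> x + y - z \<in> Lambda G"
  unfolding Lambda_def using coset_closed by blast

lemma E_sub: "E n G \<subseteq> Lambda G \<inter> nonneg_pts"
  unfolding E_def by blast

lemma E_ge: fixes G :: "(int^'d) set" assumes "G \<subseteq> nonneg_pts" shows "G \<subseteq> E n G"
proof
  fix g assume g: "g \<in> G"
  have "is_repr G g g (\<lambda>_. 0)" using g unfolding is_repr_def by simp
  hence "dist_G G g \<le> enat 0" using repr_le[of G g g "\<lambda>_. 0"] by (simp add: repr_cost_def)
  then show "g \<in> E n G" unfolding E_def using g assms Lambda_ge[of G]
    by (auto simp: zero_enat_def[symmetric])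
qed

lemma E_mono: assumes "n \<le> n'" "X \<subseteq> Y" shows "E n X \<subseteq> E n' Y"
proof
  fix l assume l: "l \<in> E n X"
  have sub: "{(g, m). is_repr X l g m} \<subseteq> {(g, m). is_repr Y l g m}"
    using assms(2) by (auto simp: is_repr_def)
  have "dist_G Y l \<le> dist_G X l"
    unfolding dist_G_def by (rule INF_superset_mono[OF sub]) simp
  also have "\<dots> \<le> enat n" using l unfolding E_def by auto
  also have "\<dots> \<le> enat n'" using assms(1) by simp
  finally show "l \<in> E n' Y" using l Lambda_mono[OF assms(2)] unfolding E_def by auto
qed

lemma E1_closed:
  fixes G :: "(int^'d) set"
  assumes G: "G \<subseteq> nonneg_pts" and xyz: "x \<in> G" "y \<in> G" "z \<in> G"
    and nn: "x + y - z \<in> nonneg_pts"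
  shows "x + y - z \<in> E 1 G"
proof -
  have L: "x + y - z \<in> Lambda G" using xyz Lambda_ge[of G] Lambda_closed by blast
  have "\<exists>g m. is_repr G (x + y - z) g m \<and> repr_cost m \<le> 1"
  proof (cases "z = x \<or> z = y")
    case True
    then have "x + y - z \<in> G" using xyz by auto
    then have "is_repr G (x + y - z) (x + y - z) (\<lambda>_. 0)" unfolding is_repr_def by simp
    moreover have "repr_cost (\<lambda>_::int^'d. 0::int) = 0" unfolding repr_cost_def by simp
    ultimately show ?thesis by (intro exI[of _ "x+y-z"] exI[of _ "\<lambda>_. 0::int"]) auto
  next
    case False
    show ?thesis
    proof (cases "x = y")
      case True
      define m where "m = (\<lambda>a. if a = z then -1 else (0::int))"
      have s: "{a. m a \<noteq> 0} = {z}" unfolding m_def by auto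
      have "is_repr G (x + y - z) x m" unfolding is_repr_def s using xyz False True
        by (auto simp: m_def) (simp add: vec_eq_iff)
      moreover have "repr_cost m = 1"
      proof -
        have "{a. m a > 0} = {}" "{a. m a < 0} = {z}" unfolding m_def by auto
        thus ?thesis unfolding repr_cost_def by (simp add: m_def)
      qed
      ultimately show ?thesis by (metis order_refl)
    next
      case ne: False
      define m where "m = (\<lambda>a. if a = x then 1 else if a = z then -1 else (0::int))"
      have s: "{a. m a \<noteq> 0} = {x, z}" unfolding m_def using False by auto
      have "is_repr G (x + y - z) y m" unfolding is_repr_def s using xyz False ne
        by (auto simp: m_def) (simp add: vec_eq_iff)
      moreover have "repr_cost m = 1"
      proof -
        have "{a. m a > 0} = {x}" "{a. m a < 0} = {z}" unfolding m_def using False by auto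
        thus ?thesis unfolding repr_cost_def using False by (simp add: m_def)
      qed
      ultimately show ?thesis by (metis order_refl)
    qed
  qed
  then obtain g m where "is_repr G (x + y - z) g m" "repr_cost m \<le> 1" by blast
  hence "dist_G G (x + y - z) \<le> enat 1"
    using repr_le order_trans by (metis enat_ord_simps(1))
  thus ?thesis unfolding E_def using L nn by simp
qed


lemma pow_nonneg: "T \<subseteq> nonneg_pts \<Longrightarrow> (E n ^^ k) T \<subseteq> nonneg_pts"
proof (cases k)
  case (Suc j) then show ?thesis using E_sub[of n "(E n ^^ j) T"] by auto
qed simp

lemma pow_Lambda: "(E n ^^ k) T \<subseteq> Lambda T"
proof (induction k)
  case 0 then show ?case using Lambda_ge by simp
next
  case (Suc k)
  have "E n ((E n ^^ k) T) \<subseteq> Lambda ((E n ^^ k) T)" using E_sub by blast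
  also have "\<dots> \<subseteq> Lambda T" using Lambda_sub[OF Suc.IH] .
  finally show ?case by simp
qed

lemma pow_mono_k: assumes "T \<subseteq> nonneg_pts" "k \<le> k'" shows "(E n ^^ k) T \<subseteq> (E n ^^ k') T"
  using assms(2)
proof (induction k' rule: dec_induct)
  case base then show ?case by simp
next
  case (step j)
  have "(E n ^^ j) T \<subseteq> E n ((E n ^^ j) T)" by (rule E_ge[OF pow_nonneg[OF assms(1)]])
  then show ?case using step by simp
qed

lemma pow_mono_set: assumes "n \<le> n'" "X \<subseteq> Y" shows "(E n ^^ k) X \<subseteq> (E n' ^^ k) Y"
proof (induction k)
  case (Suc k) then show ?case using E_mono[OF assms(1) Suc.IH] by simp
qed (use assms in simp)

lemma Einf_sub: "E_inf n T \<subseteq> Lambda T \<inter> nonneg_pts"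
proof
  fix x assume "x \<in> E_inf n T"
  then obtain k where "k \<ge> 1" "x \<in> (E n ^^ k) T" unfolding E_inf_def by auto
  then obtain j where "x \<in> E n ((E n ^^ j) T)" by (cases k) auto
  then show "x \<in> Lambda T \<inter> nonneg_pts" using E_sub[of n "(E n ^^ j) T"] Lambda_sub[OF pow_Lambda[where k=j and n=n and T=T]] by blast
qed

inductive_set Mset :: "(int^'d) set \<Rightarrow> (int^'d) set" for G where
  M0: "0 \<in> Mset G"
| MS: "w \<in> Mset G \<Longrightarrow> a \<in> G \<Longrightarrow> b \<in> G \<Longrightarrow> w + (a - b) \<in> Mset G"

lemma Mset_add: "w \<in> Mset G \<Longrightarrow> v \<in> Mset G \<Longrightarrow> v + w \<in> Mset G"
proof (induction w rule: Mset.induct)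
  case M0 then show ?case by simp
next
  case (MS w a b)
  have "v + w + (a - b) \<in> Mset G" using MS by (intro Mset.MS) auto
  then show ?case by (simp add: add.assoc)
qed

lemma Mset_neg: "w \<in> Mset G \<Longrightarrow> - w \<in> Mset G"
proof (induction w rule: Mset.induct)
  case M0 then show ?case by (simp add: Mset.M0)
next
  case (MS w a b)
  have "- w + (b - a) \<in> Mset G" using MS by (intro Mset.MS) auto
  then show ?case by (simp add: algebra_simps)
qed

lemma Lambda_Mset: assumes "g0 \<in> G" shows "Lambda G \<subseteq> (\<lambda>h. g0 + h) ` Mset G"
proof -
  have "is_subgroup (Mset G)" unfolding is_subgroup_def
    using Mset.M0 Mset_add Mset_neg by blast
  hence c: "is_coset ((\<lambda>h. g0 + h) ` Mset G)" unfolding is_coset_def by blast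
  have "G \<subseteq> (\<lambda>h. g0 + h) ` Mset G"
  proof
    fix g assume "g \<in> G"
    hence "0 + (g - g0) \<in> Mset G" using assms by (intro Mset.MS Mset.M0)
    thus "g \<in> (\<lambda>h. g0 + h) ` Mset G" by (intro image_eqI[of _ _ "g - g0"]) auto
  qed
  with c show ?thesis unfolding Lambda_def by blast
qed


lemma core:
  fixes G :: "(int^'d) set"
  assumes G: "G \<subseteq> nonneg_pts" and ab: "\<alpha> \<in> G" "\<beta> \<in> G" and v: "\<beta> - \<alpha> \<in> pos_pts"
  shows "Lambda G \<inter> nonneg_pts \<subseteq> E_inf 1 G"
proof -
  define S where "S = E_inf 1 G"
  define v where "v = \<beta> - \<alpha>"
  have vpos: "\<And>i. v $ i \<ge> 1" using v unfolding v_def pos_pts_def by (simp add: int_one_le_iff_zero_less)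
  have Snn: "S \<subseteq> nonneg_pts" unfolding S_def using Einf_sub by blast
  have GS: "G \<subseteq> S" unfolding S_def E_inf_def using E_ge[OF G, of 1]
    by (intro subsetI UN_I[of 1]) auto
  have memS: "x \<in> S \<longleftrightarrow> (\<exists>k. x \<in> (E 1 ^^ k) G)" for x
  proof
    assume "x \<in> S" then show "\<exists>k. x \<in> (E 1 ^^ k) G" unfolding S_def E_inf_def by auto
  next
    assume "\<exists>k. x \<in> (E 1 ^^ k) G"
    then obtain k where "x \<in> (E 1 ^^ k) G" by blast
    then have "x \<in> (E 1 ^^ Suc k) G" using pow_mono_k[OF G, of k "Suc k" 1] by auto
    then show "x \<in> S" unfolding S_def E_inf_def by (intro UN_I[of "Suc k"]) auto
  qed
  have closed: "x + y - z \<in> S" if xyz: "x \<in> S" "y \<in> S" "z \<in> S" and nn: "x + y - z \<in> nonneg_pts" for x y z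
  proof -
    obtain kx ky kz where k: "x \<in> (E 1 ^^ kx) G" "y \<in> (E 1 ^^ ky) G" "z \<in> (E 1 ^^ kz) G"
      using xyz memS by meson
    define K where "K = max kx (max ky kz)"
    have "x \<in> (E 1 ^^ K) G" "y \<in> (E 1 ^^ K) G" "z \<in> (E 1 ^^ K) G"
      using k pow_mono_k[OF G, of kx K 1] pow_mono_k[OF G, of ky K 1] pow_mono_k[OF G, of kz K 1]
      unfolding K_def by (auto simp: le_max_iff_disj)
    then have "x + y - z \<in> E 1 ((E 1 ^^ K) G)"
      by (intro E1_closed[OF pow_nonneg[OF G]] nn)
    then have "x + y - z \<in> (E 1 ^^ Suc K) G" by simp
    then show ?thesis using memS by blast
  qed
  have addv: "x + of_nat k *s v \<in> S" if x: "x \<in> S" for x k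
  proof (induction k)
    case 0 then show ?case using x by simp
  next
    case (Suc k)
    have nn: "(x + of_nat k *s v) + \<beta> - \<alpha> \<in> nonneg_pts"
    proof -
      have h: "(x + of_nat k *s v) $ i \<ge> 0" for i using Suc Snn unfolding nonneg_pts_def by auto
      have e: "((x + of_nat k *s v) + \<beta> - \<alpha>) $ i = (x + of_nat k *s v) $ i + v $ i" for i
        unfolding v_def by simp
      show ?thesis unfolding nonneg_pts_def
      proof (intro CollectI allI)
        fix i show "0 \<le> ((x + of_nat k *s v) + \<beta> - \<alpha>) $ i"
          using e[of i] h[of i] vpos[of i] by linarith
      qed
    qed
    have "(x + of_nat k *s v) + \<beta> - \<alpha> \<in> S" using closed[OF Suc subsetD[OF GS ab(2)] subsetD[OF GS ab(1)] nn] by simp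
    moreover have "(x + of_nat k *s v) + \<beta> - \<alpha> = x + of_nat (Suc k) *s v"
      unfolding v_def by (simp add: vec_eq_iff algebra_simps)
    ultimately show ?case by simp
  qed
  have W: "\<forall>x\<in>S. \<exists>T. x + w + of_nat T *s v \<in> S" if "w \<in> Mset G" for w
    using that
  proof (induction w rule: Mset.induct)
    case M0 then show ?case by (auto intro: exI[of _ 0])
  next
    case (MS w a b)
    show ?case
    proof
      fix x assume x: "x \<in> S"
      obtain T1 where y: "x + w + of_nat T1 *s v \<in> S" using MS.IH x by blast
      define y where "y = x + w + of_nat T1 *s v"
      define T2 where "T2 = nat (\<Sum>i\<in>UNIV. b $ i)"
      have bnn: "\<And>i. b $ i \<ge> 0" using MS.hyps G unfolding nonneg_pts_def by auto
      have ann: "\<And>i. a $ i \<ge> 0" using MS.hyps G unfolding nonneg_pts_def by auto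
      have ynn: "\<And>i. y $ i \<ge> 0" using y Snn unfolding y_def nonneg_pts_def by auto
      have bT: "b $ i \<le> of_nat T2 * v $ i" for i
      proof -
        have "b $ i \<le> (\<Sum>i\<in>UNIV. b $ i)" by (rule member_le_sum) (use bnn in auto)
        also have "\<dots> = of_nat T2" unfolding T2_def using bnn by (simp add: sum_nonneg)
        also have "\<dots> \<le> of_nat T2 * v $ i" using vpos[of i] by (simp add: mult_le_cancel_left1)
        finally show ?thesis .
      qed
      have yS: "y + of_nat T2 *s v \<in> S" using addv y unfolding y_def by blast
      have nn: "(y + of_nat T2 *s v) + a - b \<in> nonneg_pts"
      proof -
        have "((y + of_nat T2 *s v) + a - b) $ i = y $ i + (of_nat T2 * v $ i - b $ i) + a $ i" for i
          by simp
        moreover have "y $ i + (of_nat T2 * v $ i - b $ i) + a $ i \<ge> 0" for i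
          using ynn[of i] ann[of i] bT[of i] by linarith
        ultimately show ?thesis unfolding nonneg_pts_def by (intro CollectI allI) presburger
      qed
      have "(y + of_nat T2 *s v) + a - b \<in> S"
        using closed[OF yS _ _ nn] MS.hyps GS by blast
      moreover have "(y + of_nat T2 *s v) + a - b = x + (w + (a - b)) + of_nat (T1 + T2) *s v"
        unfolding y_def by (simp add: vec_eq_iff algebra_simps)
      ultimately show "\<exists>T. x + (w + (a - b)) + of_nat T *s v \<in> S" by metis
    qed
  qed
  have descend: "l \<in> S" if l: "l \<in> nonneg_pts" "l + of_nat k *s v \<in> S" for l k
    using l(2)
  proof (induction k)
    case 0 then show ?case by simp
  next
    case (Suc k)
    have eq: "(l + of_nat (Suc k) *s v) + \<alpha> - \<beta> = l + of_nat k *s v"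
      unfolding v_def by (simp add: vec_eq_iff algebra_simps)
    have nnk: "l + of_nat k *s v \<in> nonneg_pts"
    proof -
      have "0 \<le> of_nat k * v $ i" for i using vpos[of i] by simp
      then show ?thesis using l(1) unfolding nonneg_pts_def by (simp add: add_nonneg_nonneg)
    qed
    have "(l + of_nat (Suc k) *s v) + \<alpha> - \<beta> \<in> S"
      by (rule closed[OF Suc.prems subsetD[OF GS ab(1)] subsetD[OF GS ab(2)] nnk[folded eq]])
    then show ?case using Suc.IH unfolding eq by blast
  qed
  show ?thesis
  proof
    fix l assume l: "l \<in> Lambda G \<inter> nonneg_pts"
    then obtain w where w: "w \<in> Mset G" "l = \<alpha> + w"
      using Lambda_Mset[OF ab(1)] by blast
    obtain T where "\<alpha> + w + of_nat T *s v \<in> S" using W[OF w(1)] ab(1) GS by blast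
    then have "l \<in> S" using descend[of l T] l w(2) by blast
    then show "l \<in> E_inf 1 G" unfolding S_def .
  qed
qed


theorem lemma3p3:
  fixes n :: nat and T :: "(int^'d) set" and \<alpha> \<beta> :: "int^'d"
  assumes "n \<ge> 1"
    and "T \<noteq> {}" and "T \<subseteq> nonneg_pts"
    and "\<alpha> \<in> E_inf n T" and "\<beta> \<in> E_inf n T"
    and "\<beta> - \<alpha> \<in> pos_pts"
  shows "E_inf n T = E_inf 1 (T \<union> {\<alpha>, \<beta>}) \<and> E_inf 1 (T \<union> {\<alpha>, \<beta>}) = Lambda T \<inter> nonneg_pts"
proof -
  note Tn = assms(3)
  define G where "G = T \<union> {\<alpha>, \<beta>}"
  obtain a where a: "\<alpha> \<in> (E n ^^ a) T" using assms(4) unfolding E_inf_def by auto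
  obtain b where b: "\<beta> \<in> (E n ^^ b) T" using assms(5) unfolding E_inf_def by auto
  define K where "K = max a b"
  have GK: "G \<subseteq> (E n ^^ K) T" unfolding G_def K_def
    using a b pow_mono_k[OF Tn, of a "max a b" n] pow_mono_k[OF Tn, of b "max a b" n]
      pow_mono_k[OF Tn, of 0 "max a b" n] by auto
  have A: "E_inf n T \<subseteq> Lambda T \<inter> nonneg_pts" by (rule Einf_sub)
  have Gn: "G \<subseteq> nonneg_pts" unfolding G_def using A assms(4,5) Tn by auto
  have B: "Lambda T \<inter> nonneg_pts \<subseteq> E_inf 1 G"
  proof -
    have "Lambda T \<subseteq> Lambda G" unfolding G_def by (rule Lambda_mono) auto
    moreover have "Lambda G \<inter> nonneg_pts \<subseteq> E_inf 1 G"
      by (rule core[OF Gn, of \<alpha> \<beta>]) (use assms(6) in \<open>auto simp: G_def\<close>)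
    ultimately show ?thesis by blast
  qed
  have C: "E_inf 1 G \<subseteq> E_inf n T"
  proof
    fix x assume "x \<in> E_inf 1 G"
    then obtain j where j: "j \<ge> 1" "x \<in> (E 1 ^^ j) G" unfolding E_inf_def by auto
    have "(E 1 ^^ j) G \<subseteq> (E n ^^ j) ((E n ^^ K) T)"
      by (rule pow_mono_set[OF assms(1) GK])
    also have "\<dots> = (E n ^^ (j + K)) T" by (simp add: funpow_add)
    finally show "x \<in> E_inf n T" unfolding E_inf_def using j
      by (intro UN_I[of "j + K"]) auto
  qed
  have D: "E_inf 1 G \<subseteq> Lambda T \<inter> nonneg_pts"
  proof -
    have "G \<subseteq> Lambda T" unfolding G_def using A assms(4,5) Lambda_ge[of T] by auto
    then have "Lambda G \<subseteq> Lambda T" by (rule Lambda_sub)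
    then show ?thesis using Einf_sub[of 1 G] by blast
  qed
  show ?thesis using A B C D unfolding G_def[symmetric] by blast
qed

end
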